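(* Let $M_1,\dots,M_k$ be matroids on pairwise disjoint finite sets $S_1,\dots,S_k$, let $S=S_1\cup\cdots\cup S_k$, and let $L=M_1\mathbin{\Box}\cdots\mathbin{\Box} M_k$. Then $A\subseteq S$ is independent in $L$ if and only if $$\sum_{i=1}^{j-1}\lambda_{M_i}(A\cap S_i)\ \geq\ \sum_{i=1}^{j}\nu_{M_i}(A\cap S_i)$$ for all $j$ with $1\leq j\leq k$.
   Context: For a matroid $M$ on $S$ write $\rho_M$ for rank, $\rho(M)=\rho_M(S)$, $\nu_M(A)=|A|-\rho_M(A)$, $\lambda_M(A)=\rho(M)-\rho_M(A)$. For matroids $M$ on $S$ and $N$ on $T$ with $S\cap T=\emptyset$, the free product $M\mathbin{\Box} N$ is the matroid on $S\cup T$ whose independent sets are those $A$ with $A\cap S$ independent in $M$ and $\lambda_M(A\cap S)\geq\nu_N(A\cap T)$. Free product is associative, so the iterated product needs no parentheses. *)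

theory Defs
  imports Main
begin

definition matroid :: "'a set \<Rightarrow> ('a set \<Rightarrow> bool) \<Rightarrow> bool" where
  "matroid E ind \<longleftrightarrow>
     finite E \<and> ind {} \<and>
     (\<forall>A. ind A \<longrightarrow> A \<subseteq> E) \<and>
     (\<forall>A B. ind B \<longrightarrow> A \<subseteq> B \<longrightarrow> ind A) \<and>
     (\<forall>A B. ind A \<longrightarrow> ind B \<longrightarrow> card A < card B \<longrightarrow> (\<exists>x\<in>B - A. ind (insert x A)))"

definition rk :: "('a set \<Rightarrow> bool) \<Rightarrow> 'a set \<Rightarrow> nat" where
  "rk ind X = Max (card ` {I. I \<subseteq> X \<and> ind I})"

definition nullity :: "('a set \<Rightarrow> bool) \<Rightarrow> 'a set \<Rightarrow> int" where
  "nullity ind A = int (card A) - int (rk ind A)"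

definition corank :: "'a set \<Rightarrow> ('a set \<Rightarrow> bool) \<Rightarrow> 'a set \<Rightarrow> int" where
  "corank E ind A = int (rk ind E) - int (rk ind A)"

definition free_prod :: "'a set \<Rightarrow> ('a set \<Rightarrow> bool) \<Rightarrow> 'a set \<Rightarrow> ('a set \<Rightarrow> bool) \<Rightarrow> 'a set \<Rightarrow> bool" where
  "free_prod S indM T indN A \<longleftrightarrow>
     A \<subseteq> S \<union> T \<and> indM (A \<inter> S) \<and> corank S indM (A \<inter> S) \<ge> nullity indN (A \<inter> T)"

text \<open>Iterated free product M_0 \<box> M_1 \<box> ... \<box> M_j (left-nested; associativity makes
  the bracketing irrelevant).\<close>
fun fp_iter :: "(nat \<Rightarrow> 'a set) \<Rightarrow> (nat \<Rightarrow> 'a set \<Rightarrow> bool) \<Rightarrow> nat \<Rightarrow> 'a set \<Rightarrow> bool" where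
  "fp_iter S M 0 = M 0"
| "fp_iter S M (Suc j) = free_prod (\<Union>i\<le>j. S i) (fp_iter S M j) (S (Suc j)) (M (Suc j))"

end

theory Submission
  imports Defs
begin

lemma rk_eq_card_gen:
  assumes "finite B" "ind B"
  shows "rk ind B = card B"
proof -
  have fin: "finite (card ` {I. I \<subseteq> B \<and> ind I})"
    using assms(1) by (rule finite_subset[rotated, OF finite_imageI[OF finite_Pow_iff[THEN iffD2]]]) auto
  show ?thesis unfolding rk_def
    by (rule Max_eqI[OF fin]) (use assms in \<open>auto intro: card_mono\<close>)
qed

lemma m_fin:
  fixes ind :: "'a set \<Rightarrow> bool"
  assumes "matroid E ind"
  shows "finite (card ` {I. I \<subseteq> X \<and> ind I})" "card ({}::'a set) \<in> card ` {I. I \<subseteq> X \<and> ind I}"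
proof -
  have "{I. I \<subseteq> X \<and> ind I} \<subseteq> Pow E" using assms unfolding matroid_def by auto
  moreover have "finite E" using assms unfolding matroid_def by auto
  ultimately show "finite (card ` {I. I \<subseteq> X \<and> ind I})"
    by (meson finite_Pow_iff finite_imageI finite_subset)
  have "{} \<in> {I. I \<subseteq> X \<and> ind I}" using assms unfolding matroid_def by auto
  then show "card ({}::'a set) \<in> card ` {I. I \<subseteq> X \<and> ind I}" by (rule imageI)
qed

lemma rk_ub:
  assumes "matroid E ind" "I \<subseteq> X" "ind I"
  shows "card I \<le> rk ind X"
  unfolding rk_def using m_fin[OF assms(1), of X] assms by (auto intro: Max_ge)

lemma rk_att:
  assumes "matroid E ind"
  shows "\<exists>I. I \<subseteq> X \<and> ind I \<and> card I = rk ind X"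
proof -
  have "rk ind X \<in> card ` {I. I \<subseteq> X \<and> ind I}"
    unfolding rk_def using m_fin[OF assms, of X] by (intro Max_in) auto
  then show ?thesis by auto
qed

lemma rk_mono:
  assumes "matroid E ind" "X \<subseteq> Y"
  shows "rk ind X \<le> rk ind Y"
proof -
  obtain I where "I \<subseteq> X" "ind I" "card I = rk ind X" using rk_att[OF assms(1)] by blast
  then show ?thesis using rk_ub[OF assms(1), of I Y] assms(2) by auto
qed

lemma rk_ind:
  assumes "matroid E ind" "ind X"
  shows "rk ind X = card X"
proof -
  have "X \<subseteq> E" "finite E" using assms unfolding matroid_def by auto
  then show ?thesis using rk_eq_card_gen assms finite_subset by metis
qed

lemma ind_iff:
  assumes "matroid E ind" "X \<subseteq> E"
  shows "ind X \<longleftrightarrow> nullity ind X \<le> 0"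
proof
  assume "ind X" then show "nullity ind X \<le> 0" using rk_ind[OF assms(1)] unfolding nullity_def by simp
next
  assume h: "nullity ind X \<le> 0"
  have fX: "finite X" using assms unfolding matroid_def by (auto intro: finite_subset)
  obtain I where I: "I \<subseteq> X" "ind I" "card I = rk ind X" using rk_att[OF assms(1)] by blast
  have "card X \<le> card I" using h I unfolding nullity_def by simp
  then have "I = X" using I(1) fX by (meson card_seteq)
  then show "ind X" using I by simp
qed

lemma card_split:
  fixes j :: nat
  assumes fin: "\<forall>i\<le>j. finite (S i)"
    and dis: "\<forall>i\<le>j. \<forall>i'\<le>j. i \<noteq> i' \<longrightarrow> S i \<inter> S i' = {}"
    and X: "X \<subseteq> (\<Union>i\<le>j. S i)"
  shows "card X = (\<Sum>i\<le>j. card (X \<inter> S i))"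
proof -
  have "X = (\<Union>i\<le>j. X \<inter> S i)" using X by auto
  then have "card X = card (\<Union>i\<le>j. X \<inter> S i)" by simp
  also have "\<dots> = (\<Sum>i\<le>j. card (X \<inter> S i))"
    by (rule card_UN_disjoint) (use fin dis in auto)
  finally show ?thesis .
qed

lemma sum_split_last: "(\<Sum>i\<le>(j::nat). f i) = (\<Sum>i<j. f i) + (f j :: int)"
  by (simp add: lessThan_Suc_atMost[symmetric])

lemma arith_aux:
  fixes c n R' P' C P pj rj cd R :: int
  shows "n \<le> c \<Longrightarrow> c = R' - P' \<Longrightarrow> n = C - P \<Longrightarrow> R = R' + rj \<Longrightarrow> P = P' + pj
    \<Longrightarrow> pj \<le> rj \<Longrightarrow> cd = C \<Longrightarrow> cd \<le> R"
  by linarith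

lemma rank_lemma:
  fixes j :: nat
  assumes mat: "\<forall>i\<le>j. matroid (S i) (M i)"
    and dis: "\<forall>i\<le>j. \<forall>i'\<le>j. i \<noteq> i' \<longrightarrow> S i \<inter> S i' = {}"
    and ch: "\<forall>X. L X \<longleftrightarrow> X \<subseteq> (\<Union>i\<le>j. S i) \<and> (\<forall>j'\<le>j.
       (\<Sum>i<j'. corank (S i) (M i) (X \<inter> S i)) \<ge> (\<Sum>i\<le>j'. nullity (M i) (X \<inter> S i)))"
  shows "rk L (\<Union>i\<le>j. S i) = (\<Sum>i\<le>j. rk (M i) (S i))"
proof -
  let ?T = "\<Union>i\<le>j. S i"
  have fin: "\<forall>i\<le>j. finite (S i)" using mat unfolding matroid_def by auto
  have finT: "finite ?T" using fin by auto
  have F: "finite (card ` {I. I \<subseteq> ?T \<and> L I})"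
    by (rule finite_subset[rotated, OF finite_imageI[OF finite_Pow_iff[THEN iffD2, OF finT]]]) auto
  have ub: "card I \<le> (\<Sum>i\<le>j. rk (M i) (S i))" if I: "I \<subseteq> ?T" "L I" for I
  proof -
    have c: "(\<Sum>i<j. corank (S i) (M i) (I \<inter> S i)) \<ge> (\<Sum>i\<le>j. nullity (M i) (I \<inter> S i))"
      using ch I by blast
    have e1: "(\<Sum>i<j. corank (S i) (M i) (I \<inter> S i)) = (\<Sum>i<j. int (rk (M i) (S i))) - (\<Sum>i<j. int (rk (M i) (I \<inter> S i)))"
      unfolding corank_def by (simp add: sum_subtractf)
    have e2: "(\<Sum>i\<le>j. nullity (M i) (I \<inter> S i)) = (\<Sum>i\<le>j. int (card (I \<inter> S i))) - (\<Sum>i\<le>j. int (rk (M i) (I \<inter> S i)))"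
      unfolding nullity_def by (simp add: sum_subtractf)
    have "rk (M j) (I \<inter> S j) \<le> rk (M j) (S j)" using mat rk_mono by blast
    moreover have "card I = (\<Sum>i\<le>j. card (I \<inter> S i))" using card_split[OF fin dis I(1)] .
    ultimately have h1: "int (rk (M j) (I \<inter> S j)) \<le> int (rk (M j) (S j))"
      and h2: "int (card I) = (\<Sum>i\<le>j. int (card (I \<inter> S i)))" by simp_all
    have "int (card I) \<le> (\<Sum>i\<le>j. int (rk (M i) (S i)))"
      by (rule arith_aux[OF c e1 e2 sum_split_last sum_split_last h1 h2])
    then show ?thesis by (simp add: of_nat_sum[symmetric] del: of_nat_sum)
  qed
  have ex: "\<exists>B. B \<subseteq> S i \<and> M i B \<and> card B = rk (M i) (S i)" if "i \<le> j" for i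
    using rk_att[of "S i" "M i" "S i"] mat that by blast
  define B where "B i = (SOME B. B \<subseteq> S i \<and> M i B \<and> card B = rk (M i) (S i))" for i
  have B: "B i \<subseteq> S i \<and> M i (B i) \<and> card (B i) = rk (M i) (S i)" if "i \<le> j" for i
    unfolding B_def using someI_ex[OF ex[OF that]] .
  let ?I = "\<Union>i\<le>j. B i"
  have IS: "?I \<inter> S i = B i" if "i \<le> j" for i
  proof
    show "?I \<inter> S i \<subseteq> B i"
    proof
      fix x assume "x \<in> ?I \<inter> S i"
      then obtain i' where i': "i' \<le> j" "x \<in> B i'" "x \<in> S i" by blast
      then have "x \<in> S i'" using B by blast
      then have "i' = i" using dis that i' by blast
      then show "x \<in> B i" using i' by simp
    qed
    show "B i \<subseteq> ?I \<inter> S i" using B that by blast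
  qed
  have IT: "?I \<subseteq> ?T" using B by blast
  have "L ?I"
  proof -
    have rB: "rk (M i) (B i) = card (B i)" if "i \<le> j" for i
      using B[OF that] mat that rk_ind by blast
    have z1: "corank (S i) (M i) (?I \<inter> S i) = 0" if "i \<le> j" for i
      unfolding corank_def IS[OF that] rB[OF that] using B[OF that] by simp
    have z2: "nullity (M i) (?I \<inter> S i) = 0" if "i \<le> j" for i
      unfolding nullity_def IS[OF that] rB[OF that] by simp
    show ?thesis using ch IT z1 z2 by simp
  qed
  then have "card ?I \<in> card ` {I. I \<subseteq> ?T \<and> L I}"
    using IT by (intro imageI) simp
  moreover have "card ?I = (\<Sum>i\<le>j. rk (M i) (S i))"
    using card_split[OF fin dis IT] IS B by simp
  ultimately have "(\<Sum>i\<le>j. rk (M i) (S i)) \<in> card ` {I. I \<subseteq> ?T \<and> L I}"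
    by simp
  then show ?thesis unfolding rk_def[of L] using ub F by (intro Max_eqI) auto
qed

lemma arith_aux2:
  fixes cor R B nu1 C1 Sc Sr Sn Sp Cs :: int
  shows "cor = R - B \<Longrightarrow> B = C1 \<Longrightarrow> Sc = R - Sp \<Longrightarrow> Sn = C1 - Sp
    \<Longrightarrow> (nu1 \<le> cor \<longleftrightarrow> Sn + nu1 \<le> Sc)"
  by linarith

lemma char:
  fixes j :: nat
  assumes "\<forall>i\<le>j. matroid (S i) (M i)"
    and "\<forall>i\<le>j. \<forall>i'\<le>j. i \<noteq> i' \<longrightarrow> S i \<inter> S i' = {}"
  shows "\<forall>X. fp_iter S M j X \<longleftrightarrow> X \<subseteq> (\<Union>i\<le>j. S i) \<and> (\<forall>j'\<le>j.
       (\<Sum>i<j'. corank (S i) (M i) (X \<inter> S i)) \<ge> (\<Sum>i\<le>j'. nullity (M i) (X \<inter> S i)))"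
  using assms
proof (induction j)
  case 0
  then have m: "matroid (S 0) (M 0)" by simp
  show ?case
  proof
    fix X
    show "fp_iter S M 0 X \<longleftrightarrow> X \<subseteq> (\<Union>i\<le>0. S i) \<and> (\<forall>j'\<le>0.
       (\<Sum>i<j'. corank (S i) (M i) (X \<inter> S i)) \<ge> (\<Sum>i\<le>j'. nullity (M i) (X \<inter> S i)))"
    proof (cases "X \<subseteq> S 0")
      case True
      then have "X \<inter> S 0 = X" by auto
      then show ?thesis using ind_iff[OF m True] True by simp
    next
      case False
      then have "\<not> M 0 X" using m unfolding matroid_def by auto
      then show ?thesis using False by simp
    qed
  qed
next
  case (Suc j)
  have m': "\<forall>i\<le>j. matroid (S i) (M i)" using Suc.prems(1) by simp
  have d': "\<forall>i\<le>j. \<forall>i'\<le>j. i \<noteq> i' \<longrightarrow> S i \<inter> S i' = {}" using Suc.prems(2) by simp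
  note ch = Suc.IH[OF m' d']
  have rkL: "rk (fp_iter S M j) (\<Union>i\<le>j. S i) = (\<Sum>i\<le>j. rk (M i) (S i))"
    by (rule rank_lemma[OF m' d' ch])
  have fin: "\<forall>i\<le>j. finite (S i)" using m' unfolding matroid_def by auto
  let ?T = "\<Union>i\<le>j. S i"
  have finT: "finite ?T" using fin by auto
  have T: "(\<Union>i\<le>Suc j. S i) = ?T \<union> S (Suc j)" by (auto simp: le_Suc_eq)
  show ?case
  proof
    fix X
    let ?B = "X \<inter> ?T"
    let ?cond = "\<lambda>Y j'. (\<Sum>i<j'. corank (S i) (M i) (Y \<inter> S i)) \<ge> (\<Sum>i\<le>j'. nullity (M i) (Y \<inter> S i))"
    have BS: "?B \<inter> S i = X \<inter> S i" if "i \<le> j" for i using that by auto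
    have condB: "?cond ?B j' \<longleftrightarrow> ?cond X j'" if "j' \<le> j" for j'
    proof -
      have "(\<Sum>i<j'. corank (S i) (M i) (?B \<inter> S i)) = (\<Sum>i<j'. corank (S i) (M i) (X \<inter> S i))"
        using BS that by (intro sum.cong) auto
      moreover have "(\<Sum>i\<le>j'. nullity (M i) (?B \<inter> S i)) = (\<Sum>i\<le>j'. nullity (M i) (X \<inter> S i))"
        using BS that by (intro sum.cong) auto
      ultimately show ?thesis by simp
    qed
    have Lb: "fp_iter S M j ?B \<longleftrightarrow> (\<forall>j'\<le>j. ?cond X j')"
      using ch condB by auto
    have XS: "fp_iter S M (Suc j) X \<longleftrightarrow> X \<subseteq> ?T \<union> S (Suc j) \<and> fp_iter S M j ?B \<and>
        corank ?T (fp_iter S M j) ?B \<ge> nullity (M (Suc j)) (X \<inter> S (Suc j))"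
      by (simp add: free_prod_def)
    have key: "corank ?T (fp_iter S M j) ?B \<ge> nullity (M (Suc j)) (X \<inter> S (Suc j))
        \<longleftrightarrow> ?cond X (Suc j)" if Lb': "fp_iter S M j ?B"
    proof -
      have rB: "rk (fp_iter S M j) ?B = card ?B"
        using finT Lb' by (intro rk_eq_card_gen) auto
      have cB: "card ?B = (\<Sum>i\<le>j. card (X \<inter> S i))"
        using card_split[OF fin d', of ?B] BS by simp
      have e1: "corank ?T (fp_iter S M j) ?B = int (\<Sum>i\<le>j. rk (M i) (S i)) - int (card ?B)"
        unfolding corank_def rkL rB ..
      have e3: "(\<Sum>i<Suc j. corank (S i) (M i) (X \<inter> S i)) = (\<Sum>i\<le>j. int (rk (M i) (S i))) - (\<Sum>i\<le>j. int (rk (M i) (X \<inter> S i)))"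
        unfolding corank_def lessThan_Suc_atMost by (simp add: sum_subtractf)
      have e4: "(\<Sum>i\<le>j. nullity (M i) (X \<inter> S i)) = (\<Sum>i\<le>j. int (card (X \<inter> S i))) - (\<Sum>i\<le>j. int (rk (M i) (X \<inter> S i)))"
        unfolding nullity_def by (simp add: sum_subtractf)
      have e5: "(\<Sum>i\<le>Suc j. nullity (M i) (X \<inter> S i)) = (\<Sum>i\<le>j. nullity (M i) (X \<inter> S i)) + nullity (M (Suc j)) (X \<inter> S (Suc j))"
        by simp
      have e6: "int (card ?B) = (\<Sum>i\<le>j. int (card (X \<inter> S i)))" using cB by simp
      have e7: "int (\<Sum>i\<le>j. rk (M i) (S i)) = (\<Sum>i\<le>j. int (rk (M i) (S i)))" by simp
      show ?thesis unfolding e5 e3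
        by (rule arith_aux2[OF e1[unfolded e7] e6 refl e4])
    qed
    show "fp_iter S M (Suc j) X \<longleftrightarrow> X \<subseteq> (\<Union>i\<le>Suc j. S i) \<and> (\<forall>j'\<le>Suc j. ?cond X j')"
      unfolding T XS using Lb key by (auto simp: le_Suc_eq)
  qed
qed

theorem proposition4p5:
  fixes S :: "nat \<Rightarrow> 'a set" and M :: "nat \<Rightarrow> 'a set \<Rightarrow> bool" and k :: nat and A :: "'a set"
  assumes "k \<ge> 1"
    and "\<forall>i<k. matroid (S i) (M i)"
    and "\<forall>i<k. \<forall>j<k. i \<noteq> j \<longrightarrow> S i \<inter> S j = {}"
    and "A \<subseteq> (\<Union>i<k. S i)"
  shows "fp_iter S M (k - 1) A \<longleftrightarrow>
    (\<forall>j<k. (\<Sum>i<j. corank (S i) (M i) (A \<inter> S i)) \<ge> (\<Sum>i\<le>j. nullity (M i) (A \<inter> S i)))"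
proof -
  have lt: "i < k \<longleftrightarrow> i \<le> k - 1" for i using assms(1) by auto
  have m: "\<forall>i\<le>k-1. matroid (S i) (M i)" using assms(2) lt by auto
  have d: "\<forall>i\<le>k-1. \<forall>i'\<le>k-1. i \<noteq> i' \<longrightarrow> S i \<inter> S i' = {}" using assms(3) lt by auto
  have U: "(\<Union>i<k. S i) = (\<Union>i\<le>k-1. S i)" using lt by auto
  have A: "A \<subseteq> (\<Union>i\<le>k-1. S i)" using assms(4) unfolding U .
  have "(\<forall>j<k. (\<Sum>i<j. corank (S i) (M i) (A \<inter> S i)) \<ge> (\<Sum>i\<le>j. nullity (M i) (A \<inter> S i)))
     \<longleftrightarrow> (\<forall>j\<le>k-1. (\<Sum>i<j. corank (S i) (M i) (A \<inter> S i)) \<ge> (\<Sum>i\<le>j. nullity (M i) (A \<inter> S i)))"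
    by (simp only: lt)
  then show ?thesis using char[OF m d, rule_format, of A] A by simp
qed

end
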